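(* Let $\pi_n$ be a posterior density on $\Theta$, $f^*_{\hat\theta}$ a probability density symmetric about $\hat\theta\in\Theta$, and $$\mathcal{Q}=\{q_{\hat\theta}=2f^*_{\hat\theta}w_{\hat\theta}:\ w_{\hat\theta}(\theta)\in[0,1],\ w_{\hat\theta}(\theta)=1-w_{\hat\theta}(2\hat\theta-\theta)\ \forall\theta\}.$$ Then $q^*_{\hat\theta}=2f^*_{\hat\theta}w^*_{\hat\theta}\in\mathcal{Q}$ and $$q^*_{\hat\theta}\in\arg\min_{q_{\hat\theta}\in\mathcal{Q}}\mathcal{D}[\pi_n\,\|\,q_{\hat\theta}]$$ for every $\hat\theta\in\Theta$ and sample size $n$, where $\mathcal{D}$ is $\mathcal{D}_{TV}$ or any $\alpha$-divergence $\mathcal{D}_\alpha$, $\alpha\in\mathbb{R}\setminus\{0,1\}$.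
   Context: Posterior $\pi_n(\theta)=\pi(\theta)L(\theta;y_{1:n})/c(y_{1:n})$ on $\Theta\subseteq\mathbb{R}^d$, $\Theta$ symmetric about $\hat\theta$. Symmetric about $\hat\theta$ means $f(\theta)=f(2\hat\theta-\theta)$. Skewness-inducing factor: $w^*_{\hat\theta}(\theta)=\frac{\pi(\theta)L(\theta;y_{1:n})}{\pi(\theta)L(\theta;y_{1:n})+\pi(2\hat\theta-\theta)L(2\hat\theta-\theta;y_{1:n})}$, set to $1/2$ when numerator and denominator both vanish. $\mathcal{D}_{TV}[p\|q]=\tfrac12\int|p-q|$; $\mathcal{D}_\alpha[p\|q]=\frac{1}{\alpha(1-\alpha)}(1-\int p^\alpha q^{1-\alpha})$. *)

theory Defs
  imports "HOL-Analysis.Analysis"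
begin

definition refl_pt :: "'a::euclidean_space \<Rightarrow> 'a \<Rightarrow> 'a" where
  "refl_pt th t = (2::real) *\<^sub>R th - t"

definition posterior ::
  "'a::euclidean_space set \<Rightarrow> ('a \<Rightarrow> real) \<Rightarrow> ('a \<Rightarrow> real) \<Rightarrow> 'a \<Rightarrow> real" where
  "posterior \<Theta> prior L t =
     prior t * L t / enn2real (\<integral>\<^sup>+ x\<in>\<Theta>. ennreal (prior x * L x) \<partial>lborel)"

definition wstar ::
  "('a::euclidean_space \<Rightarrow> real) \<Rightarrow> ('a \<Rightarrow> real) \<Rightarrow> 'a \<Rightarrow> 'a \<Rightarrow> real" where
  "wstar prior L th t =
     (let a = prior t * L t; b = prior (refl_pt th t) * L (refl_pt th t)
      in if a = 0 \<and> a + b = 0 then 1/2 else a / (a + b))"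

definition skew_family ::
  "'a::euclidean_space set \<Rightarrow> 'a \<Rightarrow> ('a \<Rightarrow> real) \<Rightarrow> ('a \<Rightarrow> real) set" where
  "skew_family \<Theta> th f =
     {q. \<exists>w. w \<in> borel_measurable lborel \<and>
            (\<forall>t\<in>\<Theta>. 0 \<le> w t \<and> w t \<le> 1 \<and> w t = 1 - w (refl_pt th t)) \<and>
            (\<forall>t\<in>\<Theta>. q t = 2 * f t * w t)}"

definition D_TV :: "'a::euclidean_space set \<Rightarrow> ('a \<Rightarrow> real) \<Rightarrow> ('a \<Rightarrow> real) \<Rightarrow> ereal" where
  "D_TV \<Theta> p q = ereal (1/2) * enn2ereal (\<integral>\<^sup>+ t\<in>\<Theta>. ennreal \<bar>p t - q t\<bar> \<partial>lborel)"

text \<open>Integrand a^alpha b^(1-alpha) for a, b >= 0, extended by its limiting values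
  (0^alpha = infinity for alpha < 0, 0^(1-alpha) = infinity for alpha > 1, and 0 at a = b = 0).\<close>
definition alpha_integrand :: "real \<Rightarrow> real \<Rightarrow> real \<Rightarrow> ennreal" where
  "alpha_integrand \<alpha> a b =
     (if 0 < a \<and> 0 < b then ennreal (a powr \<alpha> * b powr (1 - \<alpha>))
      else if a = 0 \<and> b = 0 then 0
      else if a = 0 then (if \<alpha> < 0 then \<infinity> else 0)
      else (if 1 < \<alpha> then \<infinity> else 0))"

definition D_alpha ::
  "real \<Rightarrow> 'a::euclidean_space set \<Rightarrow> ('a \<Rightarrow> real) \<Rightarrow> ('a \<Rightarrow> real) \<Rightarrow> ereal" where
  "D_alpha \<alpha> \<Theta> p q =
     ereal (1 / (\<alpha> * (1 - \<alpha>))) *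
     (1 - enn2ereal (\<integral>\<^sup>+ t\<in>\<Theta>. alpha_integrand \<alpha> (p t) (q t) \<partial>lborel))"

end

theory Submission
  imports Defs
begin


lemma refl_invol[simp]: "refl_pt th (refl_pt th t) = t"
  by (simp add: refl_pt_def)

lemma refl_meas[measurable]: "refl_pt th \<in> borel_measurable borel"
  unfolding refl_pt_def by measurable

lemma distr_refl: "distr lborel borel (refl_pt th) = (lborel :: 'a::euclidean_space measure)"
proof -
  have "(lborel::'a measure) = density (distr lborel borel (\<lambda>x. (2::real) *\<^sub>R th + (-1::real) *\<^sub>R x)) (\<lambda>_. 1)"
    using lborel_affine[of "-1::real" "(2::real) *\<^sub>R th"] by simp
  also have "(\<lambda>x::'a. (2::real) *\<^sub>R th + (-1::real) *\<^sub>R x) = refl_pt th"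
    by (auto simp: refl_pt_def)
  finally show ?thesis by (simp add: density_1)
qed

lemma nn_refl:
  fixes g :: "'a::euclidean_space \<Rightarrow> ennreal"
  assumes g[measurable]: "g \<in> borel_measurable borel"
    and T[measurable]: "\<Theta> \<in> sets lborel" and sym: "\<forall>t\<in>\<Theta>. refl_pt th t \<in> \<Theta>"
  shows "(\<integral>\<^sup>+ t\<in>\<Theta>. g (refl_pt th t) \<partial>lborel) = (\<integral>\<^sup>+ t\<in>\<Theta>. g t \<partial>lborel)"
proof -
  have ind: "indicator \<Theta> t = (indicator \<Theta> (refl_pt th t) :: ennreal)" for t
    using sym by (metis indicator_simps refl_invol)
  have Tb[measurable]: "\<Theta> \<in> sets borel" using T by simp
  have "(\<integral>\<^sup>+ t\<in>\<Theta>. g t \<partial>lborel) = (\<integral>\<^sup>+ t. g t * indicator \<Theta> t \<partial>distr lborel borel (refl_pt th))"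
    by (simp add: distr_refl)
  also have "\<dots> = (\<integral>\<^sup>+ t. g (refl_pt th t) * indicator \<Theta> (refl_pt th t) \<partial>lborel)"
    by (rule nn_integral_distr) auto
  also have "\<dots> = (\<integral>\<^sup>+ t\<in>\<Theta>. g (refl_pt th t) \<partial>lborel)"
    by (simp add: ind[symmetric])
  finally show ?thesis ..
qed

lemma compare_sym:
  fixes g1 g2 :: "'a::euclidean_space \<Rightarrow> ennreal"
  assumes [measurable]: "g1 \<in> borel_measurable borel" "g2 \<in> borel_measurable borel"
    and T[measurable]: "\<Theta> \<in> sets lborel" and sym: "\<forall>t\<in>\<Theta>. refl_pt th t \<in> \<Theta>"
    and le: "\<And>t. t \<in> \<Theta> \<Longrightarrow> g1 t + g1 (refl_pt th t) \<le> g2 t + g2 (refl_pt th t)"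
  shows "(\<integral>\<^sup>+ t\<in>\<Theta>. g1 t \<partial>lborel) \<le> (\<integral>\<^sup>+ t\<in>\<Theta>. g2 t \<partial>lborel)"
proof -
  have Tb[measurable]: "\<Theta> \<in> sets borel" using T by simp
  have eq: "2 * (\<integral>\<^sup>+ t\<in>\<Theta>. g t \<partial>lborel) = (\<integral>\<^sup>+ t\<in>\<Theta>. (g t + g (refl_pt th t)) \<partial>lborel)"
    if [measurable]: "g \<in> borel_measurable borel" for g :: "'a \<Rightarrow> ennreal"
  proof -
    have "(\<integral>\<^sup>+ t\<in>\<Theta>. (g t + g (refl_pt th t)) \<partial>lborel)
        = (\<integral>\<^sup>+ t. g t * indicator \<Theta> t + g (refl_pt th t) * indicator \<Theta> t \<partial>lborel)"
      by (intro nn_integral_cong) (simp add: distrib_right)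
    also have "\<dots> = (\<integral>\<^sup>+ t\<in>\<Theta>. g t \<partial>lborel) + (\<integral>\<^sup>+ t\<in>\<Theta>. g (refl_pt th t) \<partial>lborel)"
      by (rule nn_integral_add) auto
    also have "\<dots> = 2 * (\<integral>\<^sup>+ t\<in>\<Theta>. g t \<partial>lborel)"
      using nn_refl[OF that T sym] by (simp add: mult_2)
    finally show ?thesis ..
  qed
  have "2 * (\<integral>\<^sup>+ t\<in>\<Theta>. g1 t \<partial>lborel) \<le> 2 * (\<integral>\<^sup>+ t\<in>\<Theta>. g2 t \<partial>lborel)"
    unfolding eq[OF assms(1)] eq[OF assms(2)]
    by (intro nn_integral_mono) (auto simp: indicator_def le)
  then show ?thesis
    by (simp add: ennreal_mult_le_mult_iff)
qed



lemma young_rev: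
  fixes x y a :: real
  assumes "x > 0" "y > 0" "a > 1"
  shows "a*x + (1-a)*y \<le> x powr a * y powr (1-a)"
proof -
  define u where "u = x powr a * y powr (1-a)"
  have u: "u > 0" using assms by (simp add: u_def)
  have "u powr (1/a) * y powr (1 - 1/a) \<le> (1/a)*u + (1-1/a)*y"
    using assms u by (intro Youngs_inequality_0) auto
  moreover have "u powr (1/a) * y powr (1 - 1/a) = x"
  proof -
    have "u powr (1/a) = x * y powr ((1-a)/a)"
      using assms by (simp add: u_def powr_mult powr_powr)
    moreover have "y powr ((1-a)/a) * y powr (1 - 1/a) = 1"
      using assms by (simp add: powr_add[symmetric] field_simps)
    ultimately show ?thesis by (simp add: mult.assoc)
  qed
  ultimately have "x \<le> (1/a)*u + (1-1/a)*y" by simp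
  then have "a * x \<le> a * ((1/a)*u + (1-1/a)*y)" using assms by simp
  also have "\<dots> = u + (a - 1) * y" using assms by (simp add: field_simps)
  finally show ?thesis by (simp add: u_def algebra_simps)
qed

lemma young_neg:
  fixes x y a :: real
  assumes "x > 0" "y > 0" "a < 0"
  shows "a*x + (1-a)*y \<le> x powr a * y powr (1-a)"
  using young_rev[of y x "1-a"] assms by (simp add: algebra_simps)

lemma young_mid:
  fixes x y a :: real
  assumes "x > 0" "y > 0" "0 < a" "a < 1"
  shows "x powr a * y powr (1-a) \<le> a*x + (1-a)*y"
  using Youngs_inequality_0[of a "1-a" x y] assms by simp

lemma split_eq:
  fixes p s f w a :: real
  assumes "p \<ge> 0" "s > 0" "f \<ge> 0" "w \<ge> 0"
  shows "p powr a * (2*f*w) powr (1-a) = s powr a * (2*f) powr (1-a) * ((p/s) powr a * w powr (1-a))"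
proof -
  have "p = s * (p/s)" using assms by simp
  then have "p powr a = s powr a * (p/s) powr a"
    using assms by (metis powr_mult less_imp_le divide_nonneg_pos)
  moreover have "(2*f*w) powr (1-a) = (2*f) powr (1-a) * w powr (1-a)"
    using assms by (simp add: powr_mult)
  ultimately show ?thesis by (simp add: algebra_simps)
qed

lemma self_pow: fixes x a :: real assumes "x \<ge> 0" shows "x powr a * x powr (1-a) = x"
  using assms by (cases "x = 0") (simp_all add: powr_add[symmetric])

lemma term_star:
  fixes p s f a :: real
  assumes "f > 0" "s > 0" "0 \<le> p" "p \<le> s"
  shows "alpha_integrand a p (2*f*(p/s)) = ennreal (s powr a * (2*f) powr (1-a) * (p/s))"
proof (cases "p = 0")
  case True then show ?thesis by (simp add: alpha_integrand_def)
next
  case False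
  then have "p > 0" using assms by simp
  have pos: "2*f*(p/s) > 0" using \<open>p > 0\<close> assms by simp
  have e: "p powr a * (2*f*(p/s)) powr (1-a) = s powr a * (2*f) powr (1-a) * (p/s)"
    using split_eq[of p s f "p/s" a] self_pow[of "p/s" a] assms \<open>p > 0\<close> by simp
  have "alpha_integrand a p (2*f*(p/s)) = ennreal (p powr a * (2*f*(p/s)) powr (1-a))"
    unfolding alpha_integrand_def using pos \<open>p > 0\<close> by (simp only: if_True simp_thms)
  then show ?thesis using e by simp
qed

lemma term_out:
  fixes p s f w a :: real
  assumes "f > 0" "s > 0" "0 \<le> p" "p \<le> s" "0 \<le> w" "w \<le> 1" "a < 0 \<or> a > 1"
  shows "alpha_integrand a p (2*f*w) = \<infinity> \<or>
    (\<exists>v. alpha_integrand a p (2*f*w) = ennreal v \<and> s powr a * (2*f) powr (1-a) * (a*(p/s) + (1-a)*w) \<le> v)"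
proof -
  define K where "K = s powr a * (2*f) powr (1-a)"
  have K: "K > 0" using assms by (simp add: K_def)
  consider "p > 0" "w > 0" | "p = 0" "w = 0" | "p = 0" "w > 0" | "p > 0" "w = 0"
    using assms by linarith
  then show ?thesis
  proof cases
    case 1
    have "a*(p/s) + (1-a)*w \<le> (p/s) powr a * w powr (1-a)"
      using assms 1 young_rev young_neg by (metis divide_pos_pos)
    then have "K * (a*(p/s) + (1-a)*w) \<le> K * ((p/s) powr a * w powr (1-a))"
      using K by simp
    have pos: "2*f*w > 0" using 1 assms by simp
    have "alpha_integrand a p (2*f*w) = ennreal (p powr a * (2*f*w) powr (1-a))"
      unfolding alpha_integrand_def using pos 1 by (simp only: if_True simp_thms)
    moreover have "p powr a * (2*f*w) powr (1-a) = K * ((p/s) powr a * w powr (1-a))"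
      using split_eq[of p s f w a] assms 1 by (simp add: K_def)
    ultimately show ?thesis using \<open>K * _ \<le> _\<close> unfolding K_def[symmetric] by auto
  next
    case 2 then show ?thesis by (simp add: alpha_integrand_def) (rule exI[of _ 0], simp)
  next
    case 3
    show ?thesis
    proof (cases "a < 0")
      case True then show ?thesis using 3 assms by (simp add: alpha_integrand_def)
    next
      case False
      then have "K * (a*(p/s) + (1-a)*w) \<le> 0" using 3 assms K
        by (intro mult_nonneg_nonpos) (auto intro: mult_nonpos_nonneg)
      then show ?thesis using 3 False assms by (simp add: alpha_integrand_def K_def) (rule exI[of _ 0], simp)
    qed
  next
    case 4
    show ?thesis
    proof (cases "a > 1")
      case True then show ?thesis using 4 assms by (simp add: alpha_integrand_def)
    next
      case False
      then have "a < 0" using assms by simp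
      then have "K * (a*(p/s) + (1-a)*w) \<le> 0" using 4 assms K
        by (simp add: mult_nonneg_nonpos mult_nonpos_nonneg divide_nonpos_pos)
      then show ?thesis using 4 False assms by (simp add: alpha_integrand_def K_def) (rule exI[of _ 0], simp)
    qed
  qed
qed

lemma term_mid:
  fixes p s f w a :: real
  assumes "f > 0" "s > 0" "0 \<le> p" "p \<le> s" "0 \<le> w" "w \<le> 1" "0 < a" "a < 1"
  shows "\<exists>v. alpha_integrand a p (2*f*w) = ennreal v \<and> v \<le> s powr a * (2*f) powr (1-a) * (a*(p/s) + (1-a)*w)"
proof -
  define K where "K = s powr a * (2*f) powr (1-a)"
  have K: "K > 0" using assms by (simp add: K_def)
  show ?thesis
  proof (cases "p > 0 \<and> w > 0")
    case True
    have "(p/s) powr a * w powr (1-a) \<le> a*(p/s) + (1-a)*w"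
      using assms True young_mid[of "p/s" w a] by simp
    then have "K * ((p/s) powr a * w powr (1-a)) \<le> K * (a*(p/s) + (1-a)*w)"
      using K by simp
    have pos: "2*f*w > 0" using True assms by simp
    have "alpha_integrand a p (2*f*w) = ennreal (p powr a * (2*f*w) powr (1-a))"
      unfolding alpha_integrand_def using pos True by (simp only: if_True simp_thms)
    moreover have "p powr a * (2*f*w) powr (1-a) = K * ((p/s) powr a * w powr (1-a))"
      using split_eq[of p s f w a] assms True by (simp add: K_def)
    ultimately show ?thesis using \<open>K * _ \<le> _\<close> unfolding K_def[symmetric] by auto
  next
    case False
    then have "p = 0 \<or> w = 0" using assms by linarith
    moreover have "0 \<le> K * (a*(p/s) + (1-a)*w)" using K assms by simp
    moreover have "alpha_integrand a p (2*f*w) = 0" using calculation(1) assms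
      by (auto simp: alpha_integrand_def)
    ultimately show ?thesis by (intro exI[of _ 0]) (simp add: K_def)
  qed
qed

lemma ennreal_add_le: "ennreal (x + y) \<le> ennreal x + ennreal y"
proof (cases "x \<ge> 0 \<and> y \<ge> 0")
  case True then show ?thesis by (simp add: ennreal_plus)
next
  case False
  then consider "x < 0" | "y < 0" by linarith
  then show ?thesis
  proof cases
    case 1 then have "ennreal (x+y) \<le> ennreal y" by (intro ennreal_leI) simp
    then show ?thesis using 1 by (simp add: ennreal_neg)
  next
    case 2 then have "ennreal (x+y) \<le> ennreal x" by (intro ennreal_leI) simp
    then show ?thesis using 2 by (simp add: ennreal_neg)
  qed
qed

definition wsf :: "real \<Rightarrow> real \<Rightarrow> real" where
  "wsf p p' = (if p = 0 \<and> p + p' = 0 then 1/2 else p / (p + p'))"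

lemma pair_star:
  assumes "f > 0" "p \<ge> 0" "p' \<ge> 0" "p + p' > 0"
  shows "alpha_integrand a p (2*f*wsf p p') + alpha_integrand a p' (2*f*(1 - wsf p p'))
       = ennreal ((p+p') powr a * (2*f) powr (1-a))"
proof -
  define s where "s = p + p'"
  have w: "wsf p p' = p/s" "1 - wsf p p' = p'/s" using assms by (auto simp: wsf_def s_def field_simps)
  have "alpha_integrand a p (2*f*wsf p p') + alpha_integrand a p' (2*f*(1 - wsf p p'))
     = ennreal (s powr a * (2*f) powr (1-a) * (p/s)) + ennreal (s powr a * (2*f) powr (1-a) * (p'/s))"
  proof -
    have s: "s > 0" "p \<le> s" "p' \<le> s" using assms by (auto simp: s_def)
    have e1: "alpha_integrand a p (2*f*wsf p p') = ennreal (s powr a * (2*f) powr (1-a) * (p/s))"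
      unfolding w(1) by (rule term_star) (use assms s in auto)
    have e2: "alpha_integrand a p' (2*f*(1 - wsf p p')) = ennreal (s powr a * (2*f) powr (1-a) * (p'/s))"
      unfolding w(2) by (rule term_star) (use assms s in auto)
    show ?thesis using e1 e2 by simp
  qed
  also have "\<dots> = ennreal (s powr a * (2*f) powr (1-a) * (p/s) + s powr a * (2*f) powr (1-a) * (p'/s))"
    using assms by (simp add: ennreal_plus s_def)
  also have "s powr a * (2*f) powr (1-a) * (p/s) + s powr a * (2*f) powr (1-a) * (p'/s) = s powr a * (2*f) powr (1-a)"
  proof -
    have "p/s + p'/s = 1" using assms by (simp add: s_def add_divide_distrib[symmetric])
    moreover have "s powr a * (2*f) powr (1-a) * (p/s) + s powr a * (2*f) powr (1-a) * (p'/s) = s powr a * (2*f) powr (1-a) * (p/s + p'/s)"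
      by (simp add: algebra_simps)
    ultimately show ?thesis by simp
  qed
  finally show ?thesis by (simp add: s_def)
qed

lemma pair_out:
  assumes "a < 0 \<or> a > 1" "f \<ge> 0" "p \<ge> 0" "p' \<ge> 0" "0 \<le> w" "w \<le> 1"
  shows "alpha_integrand a p (2*f*wsf p p') + alpha_integrand a p' (2*f*(1 - wsf p p'))
       \<le> alpha_integrand a p (2*f*w) + alpha_integrand a p' (2*f*(1 - w))"
proof -
  consider "f = 0" | "f > 0" "p + p' = 0" | "f > 0" "p + p' > 0" using assms by linarith
  then show ?thesis
  proof cases
    case 1 then show ?thesis by simp
  next
    case 2
    then have z: "p = 0" "p' = 0" using assms by auto
    show ?thesis
    proof (cases "a > 1")
      case True then show ?thesis using z 2 by (simp add: alpha_integrand_def wsf_def)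
    next
      case False
      then have "a < 0" using assms by simp
      moreover have "w > 0 \<or> 1 - w > 0" by linarith
      ultimately show ?thesis using z 2 assms
        by (auto simp: alpha_integrand_def wsf_def)
    qed
  next
    case 3
    define s where "s = p + p'"
    define K where "K = s powr a * (2*f) powr (1-a)"
    have L: "alpha_integrand a p (2*f*wsf p p') + alpha_integrand a p' (2*f*(1 - wsf p p')) = ennreal K"
      using pair_star[of f p p' a] 3 assms by (simp add: K_def s_def)
    have t1: "alpha_integrand a p (2*f*w) = \<infinity> \<or> (\<exists>v. alpha_integrand a p (2*f*w) = ennreal v \<and> K * (a*(p/s) + (1-a)*w) \<le> v)"
      using term_out[of f s p w a] 3 assms by (simp add: K_def s_def)
    have t2: "alpha_integrand a p' (2*f*(1-w)) = \<infinity> \<or> (\<exists>v. alpha_integrand a p' (2*f*(1-w)) = ennreal v \<and> K * (a*(p'/s) + (1-a)*(1-w)) \<le> v)"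
      using term_out[of f s p' "1-w" a] 3 assms by (simp add: K_def s_def)
    have sum: "K * (a*(p/s) + (1-a)*w) + K * (a*(p'/s) + (1-a)*(1-w)) = K"
    proof -
      have ps: "p/s + p'/s = 1" using 3 by (simp add: s_def add_divide_distrib[symmetric])
      have "K * (a*(p/s) + (1-a)*w) + K * (a*(p'/s) + (1-a)*(1-w)) = K * (a*(p/s + p'/s) + (1-a))"
        by (simp add: algebra_simps)
      then show ?thesis using ps by simp
    qed
    show ?thesis
    proof (cases "alpha_integrand a p (2*f*w) = \<infinity> \<or> alpha_integrand a p' (2*f*(1-w)) = \<infinity>")
      case True then show ?thesis by auto
    next
      case False
      then obtain v1 v2 where v: "alpha_integrand a p (2*f*w) = ennreal v1" "K * (a*(p/s) + (1-a)*w) \<le> v1"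
         "alpha_integrand a p' (2*f*(1-w)) = ennreal v2" "K * (a*(p'/s) + (1-a)*(1-w)) \<le> v2"
        using t1 t2 by auto
      have "ennreal K \<le> ennreal (v1 + v2)" using v sum by (intro ennreal_leI) linarith
      also have "\<dots> \<le> ennreal v1 + ennreal v2" by (rule ennreal_add_le)
      finally show ?thesis using L v by simp
    qed
  qed
qed

lemma pair_mid:
  assumes "0 < a" "a < 1" "f \<ge> 0" "p \<ge> 0" "p' \<ge> 0" "0 \<le> w" "w \<le> 1"
  shows "alpha_integrand a p (2*f*w) + alpha_integrand a p' (2*f*(1 - w))
       \<le> alpha_integrand a p (2*f*wsf p p') + alpha_integrand a p' (2*f*(1 - wsf p p'))"
proof -
  consider "f = 0" | "f > 0" "p + p' = 0" | "f > 0" "p + p' > 0" using assms by linarith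
  then show ?thesis
  proof cases
    case 1 then show ?thesis by simp
  next
    case 2
    then have z: "p = 0" "p' = 0" using assms by auto
    show ?thesis using z 2 assms by (simp add: alpha_integrand_def wsf_def)
  next
    case 3
    define s where "s = p + p'"
    define K where "K = s powr a * (2*f) powr (1-a)"
    have L: "alpha_integrand a p (2*f*wsf p p') + alpha_integrand a p' (2*f*(1 - wsf p p')) = ennreal K"
      using pair_star[of f p p' a] 3 assms by (simp add: K_def s_def)
    obtain v1 where v1: "alpha_integrand a p (2*f*w) = ennreal v1" "v1 \<le> K * (a*(p/s) + (1-a)*w)"
      using term_mid[of f s p w a] 3 assms by (auto simp: K_def s_def)
    obtain v2 where v2: "alpha_integrand a p' (2*f*(1-w)) = ennreal v2" "v2 \<le> K * (a*(p'/s) + (1-a)*(1-w))"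
      using term_mid[of f s p' "1-w" a] 3 assms by (auto simp: K_def s_def)
    have sum: "K * (a*(p/s) + (1-a)*w) + K * (a*(p'/s) + (1-a)*(1-w)) = K"
    proof -
      have ps: "p/s + p'/s = 1" using 3 by (simp add: s_def add_divide_distrib[symmetric])
      have "K * (a*(p/s) + (1-a)*w) + K * (a*(p'/s) + (1-a)*(1-w)) = K * (a*(p/s + p'/s) + (1-a))"
        by (simp add: algebra_simps)
      then show ?thesis using ps by simp
    qed
    have "ennreal v1 + ennreal v2 \<le> ennreal (K * (a*(p/s) + (1-a)*w)) + ennreal (K * (a*(p'/s) + (1-a)*(1-w)))"
      using v1 v2 by (intro add_mono ennreal_leI) auto
    also have "\<dots> \<le> ennreal K"
    proof -
      have "0 \<le> K * (a*(p/s) + (1-a)*w)" "0 \<le> K * (a*(p'/s) + (1-a)*(1-w))"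
        using assms 3 by (auto simp: K_def s_def)
      then show ?thesis using sum by (simp add: ennreal_plus[symmetric])
    qed
    finally show ?thesis using L v1 v2 by simp
  qed
qed

lemma pair_tv:
  fixes p p' f w :: real
  assumes "f \<ge> 0" "p \<ge> 0" "p' \<ge> 0" "0 \<le> w" "w \<le> 1"
  shows "\<bar>p - 2*f*wsf p p'\<bar> + \<bar>p' - 2*f*(1 - wsf p p')\<bar> \<le> \<bar>p - 2*f*w\<bar> + \<bar>p' - 2*f*(1 - w)\<bar>"
proof -
  have "\<bar>p - 2*f*wsf p p'\<bar> + \<bar>p' - 2*f*(1 - wsf p p')\<bar> = \<bar>p + p' - 2*f\<bar>"
  proof (cases "p + p' = 0")
    case True then show ?thesis using assms by (simp add: wsf_def)
  next
    case False
    then have s: "p + p' > 0" using assms by simp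
    have e1: "p - 2*f*wsf p p' = p * (p + p' - 2*f) / (p + p')"
      using s by (auto simp: wsf_def field_simps)
    have e2: "p' - 2*f*(1 - wsf p p') = p' * (p + p' - 2*f) / (p + p')"
      using s by (auto simp: wsf_def field_simps)
    have "\<bar>p * (p + p' - 2*f) / (p + p')\<bar> + \<bar>p' * (p + p' - 2*f) / (p + p')\<bar>
        = (p + p') * \<bar>p + p' - 2*f\<bar> / (p + p')"
      using s assms by (simp add: abs_mult abs_divide add_divide_distrib distrib_right)
    then show ?thesis using s e1 e2 by simp
  qed
  also have "\<dots> \<le> \<bar>p - 2*f*w\<bar> + \<bar>p' - 2*f*(1 - w)\<bar>"
  proof -
    have "p + p' - 2*f = (p - 2*f*w) + (p' - 2*f*(1 - w))" by (simp add: algebra_simps)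
    then show ?thesis by (metis abs_triangle_ineq)
  qed
  finally show ?thesis .
qed


lemma ereal_mult_left_mono_neg': "(k::real) < 0 \<Longrightarrow> (y::ereal) \<le> x \<Longrightarrow> ereal k * x \<le> ereal k * y"
  by (cases x; cases y) (auto simp: mult_left_mono_neg)

lemma wsf_scale:
  fixes a b c :: real
  assumes "c > 0" "a \<ge> 0" "b \<ge> 0"
  shows "wsf (a/c) (b/c) = (if a = 0 \<and> a + b = 0 then 1/2 else a / (a + b))"
proof (cases "a = 0")
  case True then show ?thesis using assms by (simp add: wsf_def)
next
  case False
  then have ab: "a + b > 0" "a / c \<noteq> 0" using assms by auto
  have "a/c + b/c = (a+b)/c" by (simp add: add_divide_distrib)
  then have "(a/c) / (a/c + b/c) = a / (a+b)" using assms ab by simp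
  then show ?thesis using ab False by (simp add: wsf_def)
qed

lemma wsf_sym:
  fixes p p' :: real
  assumes "p \<ge> 0" "p' \<ge> 0"
  shows "wsf p' p = 1 - wsf p p'"
proof (cases "p + p' = 0")
  case True then show ?thesis using assms by (simp add: wsf_def)
next
  case False
  then have s: "p + p' > 0" "p' + p > 0" using assms by auto
  have e: "p' / (p' + p) = 1 - p / (p + p')" using s by (simp add: field_simps)
  show ?thesis using s e unfolding wsf_def by auto
qed

lemma alpha_integrand_meas[measurable]:
  assumes [measurable]: "g \<in> borel_measurable M" "h \<in> borel_measurable M"
  shows "(\<lambda>t. alpha_integrand a (g t) (h t)) \<in> borel_measurable M"
  unfolding alpha_integrand_def by measurable

theorem corollary1:
  fixes \<Theta> :: "'a::euclidean_space set"
    and prior L f :: "'a \<Rightarrow> real"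
    and th :: 'a
  assumes Theta_meas: "\<Theta> \<in> sets lborel"
    and th_in: "th \<in> \<Theta>"
    and Theta_sym: "\<forall>t\<in>\<Theta>. refl_pt th t \<in> \<Theta>"
    and prior_meas: "prior \<in> borel_measurable lborel"
    and L_meas: "L \<in> borel_measurable lborel"
    and prior_nonneg: "\<forall>t\<in>\<Theta>. 0 \<le> prior t"
    and L_nonneg: "\<forall>t\<in>\<Theta>. 0 \<le> L t"
    and c_pos: "(\<integral>\<^sup>+ x\<in>\<Theta>. ennreal (prior x * L x) \<partial>lborel) \<noteq> 0"
    and c_fin: "(\<integral>\<^sup>+ x\<in>\<Theta>. ennreal (prior x * L x) \<partial>lborel) \<noteq> \<infinity>"
    and f_meas: "f \<in> borel_measurable lborel"
    and f_nonneg: "\<forall>t\<in>\<Theta>. 0 \<le> f t"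
    and f_int: "(\<integral>\<^sup>+ x\<in>\<Theta>. ennreal (f x) \<partial>lborel) = 1"
    and f_sym: "\<forall>t\<in>\<Theta>. f t = f (refl_pt th t)"
  shows "(\<lambda>t. 2 * f t * wstar prior L th t) \<in> skew_family \<Theta> th f
       \<and> is_arg_min (D_TV \<Theta> (posterior \<Theta> prior L)) (\<lambda>q. q \<in> skew_family \<Theta> th f)
            (\<lambda>t. 2 * f t * wstar prior L th t)
       \<and> (\<forall>\<alpha>::real. \<alpha> \<noteq> 0 \<and> \<alpha> \<noteq> 1 \<longrightarrow>
            is_arg_min (D_alpha \<alpha> \<Theta> (posterior \<Theta> prior L)) (\<lambda>q. q \<in> skew_family \<Theta> th f)
              (\<lambda>t. 2 * f t * wstar prior L th t))"
  
proof -
  define c where "c = enn2real (\<integral>\<^sup>+ x\<in>\<Theta>. ennreal (prior x * L x) \<partial>lborel)"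
  have c: "c > 0" using c_pos c_fin
    by (simp add: c_def enn2real_positive_iff top.not_eq_extremum zero_less_iff_neq_zero)
  define P where "P = posterior \<Theta> prior L"
  have P_def': "P t = prior t * L t / c" for t by (simp add: P_def posterior_def c_def)
  have P_nn: "t \<in> \<Theta> \<Longrightarrow> P t \<ge> 0" for t using prior_nonneg L_nonneg c by (simp add: P_def')
  define ws where "ws = wstar prior L th"
  have ws_eq: "ws t = wsf (P t) (P (refl_pt th t))" if "t \<in> \<Theta>" for t
    using wsf_scale[OF c, of "prior t * L t" "prior (refl_pt th t) * L (refl_pt th t)"]
      prior_nonneg L_nonneg Theta_sym that
    by (simp add: ws_def wstar_def P_def' Let_def)
  have ws_sym: "ws (refl_pt th t) = 1 - ws t" if "t \<in> \<Theta>" for t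
  proof -
    have r: "refl_pt th t \<in> \<Theta>" using Theta_sym that by simp
    have "wsf (P (refl_pt th t)) (P t) = 1 - wsf (P t) (P (refl_pt th t))"
      by (rule wsf_sym) (use P_nn that r in auto)
    then show ?thesis using ws_eq[OF that] ws_eq[OF r] by simp
  qed
  have ws_01: "0 \<le> ws t \<and> ws t \<le> 1" if "t \<in> \<Theta>" for t
  proof -
    have "P t \<ge> 0" "P (refl_pt th t) \<ge> 0" using that Theta_sym P_nn by auto
    then show ?thesis using ws_eq[OF that] by (auto simp: wsf_def field_simps)
  qed
  have [measurable]: "prior \<in> borel_measurable borel" "L \<in> borel_measurable borel"
    "f \<in> borel_measurable borel" using prior_meas L_meas f_meas by auto
  have ws_meas[measurable]: "ws \<in> borel_measurable borel"
    unfolding ws_def wstar_def Let_def by measurable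
  have P_meas[measurable]: "P \<in> borel_measurable borel"
    unfolding P_def posterior_def by measurable
  have Tb: "\<Theta> \<in> sets borel" using Theta_meas by simp
  define qs where "qs = (\<lambda>t. 2 * f t * ws t)"
  have mem: "qs \<in> skew_family \<Theta> th f"
    unfolding skew_family_def qs_def using ws_01 ws_sym ws_meas by (intro CollectI exI[of _ ws]) auto
  have fam: "\<exists>w. w \<in> borel_measurable borel \<and> (\<forall>t\<in>\<Theta>. 0 \<le> w t \<and> w t \<le> 1 \<and> w t = 1 - w (refl_pt th t))
      \<and> (\<forall>t\<in>\<Theta>. y t = 2 * f t * w t)" if "y \<in> skew_family \<Theta> th f" for y
    using that by (auto simp: skew_family_def)
  have frefl: "f (refl_pt th t) = f t" if "t \<in> \<Theta>" for t using f_sym that by simp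
  have cong: "(\<integral>\<^sup>+ t\<in>\<Theta>. g (P t) (y t) \<partial>lborel) = (\<integral>\<^sup>+ t\<in>\<Theta>. g (P t) (2 * f t * w t) \<partial>lborel)"
    if "\<forall>t\<in>\<Theta>. y t = 2 * f t * w t" for g :: "real \<Rightarrow> real \<Rightarrow> ennreal" and y w
    using that by (intro set_nn_integral_cong) auto
  have TV: "D_TV \<Theta> P qs \<le> D_TV \<Theta> P y" if y: "y \<in> skew_family \<Theta> th f" for y
  proof -
    obtain w where w[measurable]: "w \<in> borel_measurable borel"
      and w01: "\<forall>t\<in>\<Theta>. 0 \<le> w t \<and> w t \<le> 1 \<and> w t = 1 - w (refl_pt th t)"
      and wy: "\<forall>t\<in>\<Theta>. y t = 2 * f t * w t" using fam[OF y] by blast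
    have "(\<integral>\<^sup>+ t\<in>\<Theta>. ennreal \<bar>P t - qs t\<bar> \<partial>lborel) \<le> (\<integral>\<^sup>+ t\<in>\<Theta>. ennreal \<bar>P t - 2 * f t * w t\<bar> \<partial>lborel)"
      unfolding qs_def
    proof (rule compare_sym[OF _ _ Theta_meas Theta_sym])
      fix t assume t: "t \<in> \<Theta>"
      have rt: "refl_pt th t \<in> \<Theta>" using t Theta_sym by simp
      have "\<bar>P t - 2 * f t * ws t\<bar> + \<bar>P (refl_pt th t) - 2 * f t * (1 - ws t)\<bar>
          \<le> \<bar>P t - 2 * f t * w t\<bar> + \<bar>P (refl_pt th t) - 2 * f t * (1 - w t)\<bar>"
      proof -
        have wt: "0 \<le> w t" "w t \<le> 1" using w01 t by blast+
        have ft: "0 \<le> f t" using f_nonneg t by blast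
        show ?thesis unfolding ws_eq[OF t] by (rule pair_tv[OF ft P_nn[OF t] P_nn[OF rt] wt])
      qed
      then show "ennreal \<bar>P t - 2 * f t * ws t\<bar> + ennreal \<bar>P (refl_pt th t) - 2 * f (refl_pt th t) * ws (refl_pt th t)\<bar>
          \<le> ennreal \<bar>P t - 2 * f t * w t\<bar> + ennreal \<bar>P (refl_pt th t) - 2 * f (refl_pt th t) * w (refl_pt th t)\<bar>"
      proof -
        have wr: "w (refl_pt th t) = 1 - w t" using w01 t by fastforce
        have nn: "\<bar>P t - 2 * f t * ws t\<bar> \<ge> 0" "\<bar>P (refl_pt th t) - 2 * f t * (1 - ws t)\<bar> \<ge> 0"
          "\<bar>P t - 2 * f t * w t\<bar> \<ge> 0" "\<bar>P (refl_pt th t) - 2 * f t * (1 - w t)\<bar> \<ge> 0" by (rule abs_ge_zero)+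
        show ?thesis unfolding wr ws_sym[OF t] frefl[OF t]
          unfolding ennreal_plus[OF nn(1) nn(2), symmetric] ennreal_plus[OF nn(3) nn(4), symmetric]
          by (rule ennreal_leI) fact
      qed
    qed measurable
    also have "\<dots> = (\<integral>\<^sup>+ t\<in>\<Theta>. ennreal \<bar>P t - y t\<bar> \<partial>lborel)"
      using cong[OF wy, of "\<lambda>a b. ennreal \<bar>a - b\<bar>"] by simp
    finally show ?thesis unfolding D_TV_def
      by (intro ereal_mult_left_mono) (auto simp: less_eq_ennreal.rep_eq[symmetric])
  qed
  have AL: "D_alpha a \<Theta> P qs \<le> D_alpha a \<Theta> P y" if y: "y \<in> skew_family \<Theta> th f" and a: "a \<noteq> 0" "a \<noteq> 1" for y a
  proof -
    obtain w where w[measurable]: "w \<in> borel_measurable borel"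
      and w01: "\<forall>t\<in>\<Theta>. 0 \<le> w t \<and> w t \<le> 1 \<and> w t = 1 - w (refl_pt th t)"
      and wy: "\<forall>t\<in>\<Theta>. y t = 2 * f t * w t" using fam[OF y] by blast
    have Jy: "(\<integral>\<^sup>+ t\<in>\<Theta>. alpha_integrand a (P t) (y t) \<partial>lborel) = (\<integral>\<^sup>+ t\<in>\<Theta>. alpha_integrand a (P t) (2 * f t * w t) \<partial>lborel)"
      by (rule cong[OF wy])
    have pt: "t \<in> \<Theta> \<Longrightarrow> refl_pt th t \<in> \<Theta> \<and> 0 \<le> f t \<and> 0 \<le> P t \<and> 0 \<le> P (refl_pt th t) \<and> 0 \<le> w t \<and> w t \<le> 1" for t
    proof -
      assume t: "t \<in> \<Theta>"
      then have r: "refl_pt th t \<in> \<Theta>" using Theta_sym by blast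
      show ?thesis using t r f_nonneg P_nn[OF t] P_nn[OF r] w01 by blast
    qed
    have rw: "alpha_integrand a (P (refl_pt th t)) (2 * f (refl_pt th t) * v (refl_pt th t))
        = alpha_integrand a (P (refl_pt th t)) (2 * f t * (1 - v t))"
      if "t \<in> \<Theta>" "v (refl_pt th t) = 1 - v t" for t v
      using that frefl by simp
    show ?thesis
    proof (cases "0 < a \<and> a < 1")
      case True
      have "(\<integral>\<^sup>+ t\<in>\<Theta>. alpha_integrand a (P t) (2 * f t * w t) \<partial>lborel) \<le> (\<integral>\<^sup>+ t\<in>\<Theta>. alpha_integrand a (P t) (qs t) \<partial>lborel)"
        unfolding qs_def
      proof (rule compare_sym[OF _ _ Theta_meas Theta_sym])
        fix t assume t: "t \<in> \<Theta>"
        show "alpha_integrand a (P t) (2 * f t * w t) + alpha_integrand a (P (refl_pt th t)) (2 * f (refl_pt th t) * w (refl_pt th t))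
          \<le> alpha_integrand a (P t) (2 * f t * ws t) + alpha_integrand a (P (refl_pt th t)) (2 * f (refl_pt th t) * ws (refl_pt th t))"
        proof -
          have wr: "w (refl_pt th t) = 1 - w t" using w01 t by fastforce
          show ?thesis unfolding wr ws_sym[OF t] frefl[OF t] ws_eq[OF t]
            by (rule pair_mid) (use True pt[OF t] in auto)
        qed
      qed measurable
      then have "1 - enn2ereal (\<integral>\<^sup>+ t\<in>\<Theta>. alpha_integrand a (P t) (qs t) \<partial>lborel)
          \<le> 1 - enn2ereal (\<integral>\<^sup>+ t\<in>\<Theta>. alpha_integrand a (P t) (y t) \<partial>lborel)"
        unfolding Jy by (intro ereal_minus_mono) (auto simp: less_eq_ennreal.rep_eq[symmetric])
      moreover have "0 \<le> 1 / (a * (1 - a))" using True by simp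
      ultimately show ?thesis unfolding D_alpha_def
        by (intro ereal_mult_left_mono) auto
    next
      case False
      then have out: "a < 0 \<or> a > 1" using a by linarith
      have "(\<integral>\<^sup>+ t\<in>\<Theta>. alpha_integrand a (P t) (qs t) \<partial>lborel) \<le> (\<integral>\<^sup>+ t\<in>\<Theta>. alpha_integrand a (P t) (2 * f t * w t) \<partial>lborel)"
        unfolding qs_def
      proof (rule compare_sym[OF _ _ Theta_meas Theta_sym])
        fix t assume t: "t \<in> \<Theta>"
        show "alpha_integrand a (P t) (2 * f t * ws t) + alpha_integrand a (P (refl_pt th t)) (2 * f (refl_pt th t) * ws (refl_pt th t))
          \<le> alpha_integrand a (P t) (2 * f t * w t) + alpha_integrand a (P (refl_pt th t)) (2 * f (refl_pt th t) * w (refl_pt th t))"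
        proof -
          have wr: "w (refl_pt th t) = 1 - w t" using w01 t by fastforce
          show ?thesis unfolding wr ws_sym[OF t] frefl[OF t] ws_eq[OF t]
            by (rule pair_out) (use out pt[OF t] in auto)
        qed
      qed measurable
      then have "1 - enn2ereal (\<integral>\<^sup>+ t\<in>\<Theta>. alpha_integrand a (P t) (y t) \<partial>lborel)
          \<le> 1 - enn2ereal (\<integral>\<^sup>+ t\<in>\<Theta>. alpha_integrand a (P t) (qs t) \<partial>lborel)"
        unfolding Jy by (intro ereal_minus_mono) (auto simp: less_eq_ennreal.rep_eq[symmetric])
      moreover have "1 / (a * (1 - a)) < 0" using out
        by (auto simp: divide_less_0_iff mult_less_0_iff)
      ultimately show ?thesis unfolding D_alpha_def
        by (intro ereal_mult_left_mono_neg') auto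
    qed
  qed
  have qs_eq: "(\<lambda>t. 2 * f t * wstar prior L th t) = qs" by (simp add: qs_def ws_def)
  show ?thesis unfolding P_def[symmetric] qs_eq is_arg_min_linorder
    using mem TV AL by blast
qed

end
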